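(* Let $n\ge1$, $d=2^n$. For an $n$-qubit density matrix $\rho$ define $\tilde M_2(\rho)=-\log\frac{\sum_{P\in\mathcal{P}_n}\mathrm{tr}(P\rho)^4}{\sum_{P\in\mathcal{P}_n}\mathrm{tr}(P\rho)^2}$ (equivalently $\tilde M_2(\rho)=M_2(\rho)-S_2(\rho)$ with $M_2(\rho)=-\log\big(d\,\mathrm{tr}(Q\rho^{\otimes4})\big)$ and $S_2(\rho)=-\log\mathrm{tr}(\rho^2)$). Then: (i) $\tilde M_2(\rho)=0$ if and only if $\rho$ is a (mixed) stabilizer state; (ii) $\tilde M_2(C\rho C^\dagger)=\tilde M_2(\rho)$ for every $n$-qubit Clifford unitary $C$; (iii) $\tilde M_2(\rho\otimes\sigma)=\tilde M_2(\rho)+\tilde M_2(\sigma)$ for density matrices $\rho,\sigma$ on any numbers of qubits; in particular, if $S$ is a (mixed) stabilizer state then $\tilde M_2(\rho\otimes S)=\tilde M_2(\rho)$.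
   Context: Logarithms are base 2. $\mathcal{P}_n$ is the set of the $4^n$ $n$-qubit Pauli strings $\sigma_1\otimes\cdots\otimes\sigma_n$, $\sigma_i\in\{I,X,Y,Z\}$; $Q=d^{-2}\sum_{P\in\mathcal{P}_n}P^{\otimes4}$. The Clifford group consists of unitaries $C$ with $CPC^\dagger\in\{\pm1,\pm i\}\mathcal{P}_n$ for all $P\in\mathcal{P}_n$. A (mixed) stabilizer state is a positive semidefinite operator of the form $\chi=\frac{I}{d}+\frac1d\sum_{P\in G}\phi_P P$, where $G\subseteq\mathcal{P}_n\setminus\{I\}$ with $0\le|G|\le d-1$ and $\phi_P\in\{-1,+1\}$ (pure stabilizer states are exactly those with $|G|=d-1$). *)

theory Defs
  imports "Jordan_Normal_Form.Matrix" Complex_Main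
begin

definition mtrace :: "complex mat \<Rightarrow> complex" where
  "mtrace A = (\<Sum>i<dim_row A. A $$ (i, i))"

definition dagger :: "complex mat \<Rightarrow> complex mat" where
  "dagger A = mat (dim_col A) (dim_row A) (\<lambda>(i, j). cnj (A $$ (j, i)))"

definition kron :: "complex mat \<Rightarrow> complex mat \<Rightarrow> complex mat" where
  "kron A B = mat (dim_row A * dim_row B) (dim_col A * dim_col B)
     (\<lambda>(i, j). A $$ (i div dim_row B, j div dim_col B) * B $$ (i mod dim_row B, j mod dim_col B))"

text \<open>Single-qubit Paulis: 0 = I, 1 = X, 2 = Y, 3 = Z.\<close>
definition pauli1 :: "nat \<Rightarrow> complex mat" where
  "pauli1 k = (if k = 0 then mat_of_rows_list 2 [[1, 0], [0, 1]]
     else if k = 1 then mat_of_rows_list 2 [[0, 1], [1, 0]]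
     else if k = 2 then mat_of_rows_list 2 [[0, - \<i>], [\<i>, 0]]
     else mat_of_rows_list 2 [[1, 0], [0, - 1]])"

definition pauli_string :: "nat list \<Rightarrow> complex mat" where
  "pauli_string ks = foldr (\<lambda>k M. kron (pauli1 k) M) ks (1\<^sub>m 1)"

definition pauli_labels :: "nat \<Rightarrow> nat list set" where
  "pauli_labels n = {ks. length ks = n \<and> set ks \<subseteq> {0, 1, 2, 3}}"

definition psd :: "complex mat \<Rightarrow> bool" where
  "psd A \<longleftrightarrow> A \<in> carrier_mat (dim_row A) (dim_row A) \<and>
     (\<forall>v \<in> carrier_vec (dim_row A).
        let q = (\<Sum>i<dim_row A. cnj (v $ i) * (A *\<^sub>v v) $ i) in Im q = 0 \<and> Re q \<ge> 0)"

definition density_matrix :: "nat \<Rightarrow> complex mat \<Rightarrow> bool" where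
  "density_matrix n \<rho> \<longleftrightarrow> \<rho> \<in> carrier_mat (2 ^ n) (2 ^ n) \<and> psd \<rho> \<and> mtrace \<rho> = 1"

text \<open>tr(P rho) is real for Hermitian rho; we use its real part.\<close>
definition M2t :: "nat \<Rightarrow> complex mat \<Rightarrow> real" where
  "M2t n \<rho> = - log 2
     ((\<Sum>P\<in>pauli_labels n. (Re (mtrace (pauli_string P * \<rho>))) ^ 4) /
      (\<Sum>P\<in>pauli_labels n. (Re (mtrace (pauli_string P * \<rho>))) ^ 2))"

definition stabilizer_state :: "nat \<Rightarrow> complex mat \<Rightarrow> bool" where
  "stabilizer_state n \<chi> \<longleftrightarrow>
     (\<exists>G \<phi>. G \<subseteq> pauli_labels n - {replicate n 0} \<and> card G \<le> 2 ^ n - 1 \<and>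
        (\<forall>P\<in>G. \<phi> P \<in> {-1, 1 :: complex}) \<and>
        \<chi> = mat (2 ^ n) (2 ^ n) (\<lambda>(i, j).
              (if i = j then 1 else 0) / 2 ^ n
              + (1 / 2 ^ n) * (\<Sum>P\<in>G. \<phi> P * pauli_string P $$ (i, j))) \<and>
        psd \<chi>)"

definition unitary :: "nat \<Rightarrow> complex mat \<Rightarrow> bool" where
  "unitary d C \<longleftrightarrow> C \<in> carrier_mat d d \<and> C * dagger C = 1\<^sub>m d \<and> dagger C * C = 1\<^sub>m d"

definition clifford :: "nat \<Rightarrow> complex mat \<Rightarrow> bool" where
  "clifford n C \<longleftrightarrow> unitary (2 ^ n) C \<and>
     (\<forall>P\<in>pauli_labels n. \<exists>Q\<in>pauli_labels n. \<exists>c\<in>{1, -1, \<i>, - \<i>}.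
        C * pauli_string P * dagger C = c \<cdot>\<^sub>m pauli_string Q)"

end

theory Submission
  imports Defs
begin

lemma sum_lt2: "(\<Sum>i<(2::nat). f i) = f 0 + f 1"
  by (simp add: numeral_2_eq_2)
lemma sum_lt4: "(\<Sum>i<(4::nat). f i) = f 0 + f 1 + f 2 + f 3"
  by (simp add: numeral_eq_Suc add.assoc)

lemma p1c[simp]: "pauli1 k \<in> carrier_mat 2 2" unfolding pauli1_def by (auto simp: mat_of_rows_list_def)
lemma p1dims[simp]: "dim_row (pauli1 k) = 2" "dim_col (pauli1 k) = 2"
  using carrier_matD[OF p1c[of k]] by auto

definition p1e :: "nat \<Rightarrow> nat \<Rightarrow> nat \<Rightarrow> complex" where
 "p1e k i j = (if k = 0 then (if i = j then 1 else 0)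
     else if k = 1 then (if i = j then 0 else 1)
     else if k = 2 then (if i = j then 0 else if i = 0 then - \<i> else \<i>)
     else (if i = j then (if i = 0 then 1 else -1) else 0))"

lemma p1_entry: "i < 2 \<Longrightarrow> j < 2 \<Longrightarrow> pauli1 k $$ (i,j) = p1e k i j"
  unfolding pauli1_def p1e_def
  by (auto simp: mat_of_rows_list_def less_2_cases_iff)

lemma mult_entry: "A \<in> carrier_mat r m \<Longrightarrow> B \<in> carrier_mat m c \<Longrightarrow> i < r \<Longrightarrow> j < c \<Longrightarrow>
   (A * B) $$ (i,j) = (\<Sum>k<m. A $$ (i,k) * B $$ (k,j))"
  by (auto simp: scalar_prod_def lessThan_atLeast0 intro!: sum.cong)

lemma p1_herm: "i < 2 \<Longrightarrow> j < 2 \<Longrightarrow> cnj (p1e k i j) = p1e k j i"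
  unfolding p1e_def by (auto simp: less_2_cases_iff)

lemma p1_sq: "i < 2 \<Longrightarrow> j < 2 \<Longrightarrow> (\<Sum>t<2. p1e k i t * p1e k t j) = (if i = j then 1 else 0)"
  unfolding p1e_def sum_lt2 by (auto simp: less_2_cases_iff)

lemma p1_orth: "a < 4 \<Longrightarrow> b < 4 \<Longrightarrow> (\<Sum>i<2. \<Sum>t<2. p1e a i t * p1e b t i) = (if a = b then 2 else 0)"
  unfolding p1e_def sum_lt2 by (auto simp: less_2_cases_iff eval_nat_numeral less_Suc_eq)

lemma p1_compl: "i < 2 \<Longrightarrow> j < 2 \<Longrightarrow> k < 2 \<Longrightarrow> l < 2 \<Longrightarrow>
   (\<Sum>a<4. p1e a i j * p1e a k l) = (if i = l \<and> j = k then 2 else 0)"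
  unfolding p1e_def sum_lt4 by (auto simp: less_2_cases_iff)


lemma sum_prod_idx: "(\<Sum>t<(a::nat)*b. f t) = (\<Sum>t1<a. \<Sum>t2<b. f (t1*b+t2))"
proof (induction a)
  case 0 then show ?case by simp
next
  case (Suc a)
  have "{..<Suc a * b} = {..<a*b} \<union> {a*b..<a*b+b}" by auto
  then have "(\<Sum>t<Suc a*b. f t) = (\<Sum>t<a*b. f t) + (\<Sum>t\<in>{a*b..<a*b+b}. f t)"
    by (simp add: sum.union_disjoint ivl_disj_int)
  also have "(\<Sum>t\<in>{a*b..<a*b+b}. f t) = (\<Sum>t2<b. f (a*b+t2))"
    by (rule sum.reindex_bij_witness[of _ "\<lambda>t. a*b+t" "\<lambda>t. t - a*b"]) auto
  finally show ?case using Suc by simp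
qed

lemma kron_dims[simp]: "dim_row (kron A B) = dim_row A * dim_row B" "dim_col (kron A B) = dim_col A * dim_col B"
  by (auto simp: kron_def)

lemma kron_carrier: "A \<in> carrier_mat a a' \<Longrightarrow> B \<in> carrier_mat b b' \<Longrightarrow> kron A B \<in> carrier_mat (a*b) (a'*b')"
  by auto

lemma kron_entry: "i < dim_row A * dim_row B \<Longrightarrow> j < dim_col A * dim_col B \<Longrightarrow>
  kron A B $$ (i,j) = A $$ (i div dim_row B, j div dim_col B) * B $$ (i mod dim_row B, j mod dim_col B)"
  by (auto simp: kron_def)

lemma div_mod_lt: "(i::nat) < a * b \<Longrightarrow> i div b < a \<and> i mod b < b \<and> 0 < b"
  by (metis less_mult_imp_div_less mod_less_divisor mult_0_right not_gr_zero not_less_zero)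

lemma kron_mult:
  assumes A: "A \<in> carrier_mat a a'" and B: "B \<in> carrier_mat b b'"
    and C: "C \<in> carrier_mat a' a''" and D: "D \<in> carrier_mat b' b''"
  shows "kron A B * kron C D = kron (A * C) (B * D)"
proof (rule eq_matI)
  fix i j assume i: "i < dim_row (kron (A * C) (B * D))" and j: "j < dim_col (kron (A * C) (B * D))"
  from i have i': "i < a * b" using A B by simp
  from j have j': "j < a'' * b''" using C D by simp
  note ii = div_mod_lt[OF i'] and jj = div_mod_lt[OF j']
  have "(kron A B * kron C D) $$ (i,j) = (\<Sum>t<a'*b'. kron A B $$ (i,t) * kron C D $$ (t,j))"
    using A B C D i' j' by (subst mult_entry[of _ "a*b" "a'*b'" _ "a''*b''"]) (auto intro: kron_carrier)
  also have "\<dots> = (\<Sum>t1<a'. \<Sum>t2<b'. kron A B $$ (i,t1*b'+t2) * kron C D $$ (t1*b'+t2,j))"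
    by (rule sum_prod_idx)
  also have "\<dots> = (\<Sum>t1<a'. \<Sum>t2<b'. (A $$ (i div b, t1) * C $$ (t1, j div b'')) * (B $$ (i mod b, t2) * D $$ (t2, j mod b'')))"
  proof (intro sum.cong refl)
    fix t1 t2 assume t1: "t1 \<in> {..<a'}" and t2: "t2 \<in> {..<b'}"
    have "t1*b'+t2 < (t1+1)*b'" using t2 by simp
    also have "\<dots> \<le> a'*b'" using t1 by (intro mult_right_mono) auto
    finally have t: "t1*b'+t2 < a'*b'" .
    have "(t1*b'+t2) div b' = t1" "(t1*b'+t2) mod b' = t2" using t2 by auto
    then show "kron A B $$ (i,t1*b'+t2) * kron C D $$ (t1*b'+t2,j) = (A $$ (i div b, t1) * C $$ (t1, j div b'')) * (B $$ (i mod b, t2) * D $$ (t2, j mod b''))"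
      using A B C D i' j' t by (simp add: kron_entry)
  qed
  also have "\<dots> = (\<Sum>t1<a'. A $$ (i div b, t1) * C $$ (t1, j div b'')) * (\<Sum>t2<b'. B $$ (i mod b, t2) * D $$ (t2, j mod b''))"
    by (simp add: sum_product)
  also have "\<dots> = (A * C) $$ (i div b, j div b'') * (B * D) $$ (i mod b, j mod b'')"
    using ii jj by (simp add: mult_entry[OF A C] mult_entry[OF B D] del: index_mult_mat)
  also have "\<dots> = kron (A * C) (B * D) $$ (i, j)"
    using A B C D i' j' by (subst kron_entry) auto
  finally show "(kron A B * kron C D) $$ (i,j) = kron (A * C) (B * D) $$ (i, j)" .
qed (use A B C D in auto)

lemma mtrace_kron:
  assumes A: "A \<in> carrier_mat a a" and B: "B \<in> carrier_mat b b"
  shows "mtrace (kron A B) = mtrace A * mtrace B"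
proof -
  have "mtrace (kron A B) = (\<Sum>t<a*b. kron A B $$ (t,t))" using A B by (simp add: mtrace_def)
  also have "\<dots> = (\<Sum>t1<a. \<Sum>t2<b. kron A B $$ (t1*b+t2,t1*b+t2))" by (rule sum_prod_idx)
  also have "\<dots> = (\<Sum>t1<a. \<Sum>t2<b. A $$ (t1,t1) * B $$ (t2,t2))"
  proof (intro sum.cong refl)
    fix t1 t2 assume t1: "t1 \<in> {..<a}" and t2: "t2 \<in> {..<b}"
    have "t1*b+t2 < (t1+1)*b" using t2 by simp
    also have "\<dots> \<le> a*b" using t1 by (intro mult_right_mono) auto
    finally have t: "t1*b+t2 < a*b" .
    have "(t1*b+t2) div b = t1" "(t1*b+t2) mod b = t2" using t2 by auto
    then show "kron A B $$ (t1*b+t2,t1*b+t2) = A $$ (t1,t1) * B $$ (t2,t2)"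
      using A B t by (simp add: kron_entry)
  qed
  also have "\<dots> = mtrace A * mtrace B" using A B by (simp add: mtrace_def sum_product)
  finally show ?thesis .
qed

lemma eq_div_mod_iff: "0 < (N::nat) \<Longrightarrow> (i = l) = (i div N = l div N \<and> i mod N = l mod N)"
  by (metis div_mult_mod_eq)

lemma kron_one_one: "kron (1\<^sub>m a) (1\<^sub>m b) = 1\<^sub>m (a*b)"
proof (rule eq_matI)
  fix i j assume i: "i < dim_row (1\<^sub>m (a*b))" and j: "j < dim_col (1\<^sub>m (a*b))"
  then have i': "i < a*b" and j': "j < a*b" by auto
  note ii = div_mod_lt[OF i'] and jj = div_mod_lt[OF j']
  show "kron (1\<^sub>m a) (1\<^sub>m b) $$ (i, j) = 1\<^sub>m (a * b) $$ (i, j)"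
    using i' j' ii jj eq_div_mod_iff[of b i j] by (simp add: kron_entry)
qed auto

lemma kron_one_left: "kron (1\<^sub>m 1) B = B"
  by (rule eq_matI) (auto simp: kron_entry)

lemma kron_assoc:
  assumes A: "A \<in> carrier_mat ra ca" and B: "B \<in> carrier_mat rb cb" and C: "C \<in> carrier_mat rc cc"
  shows "kron A (kron B C) = kron (kron A B) C"
proof (rule eq_matI)
  fix i j assume i: "i < dim_row (kron (kron A B) C)" and j: "j < dim_col (kron (kron A B) C)"
  then have i': "i < ra * rb * rc" and j': "j < ca * cb * cc" using A B C by auto
  then have i2: "i < ra * (rb * rc)" and j2: "j < ca * (cb * cc)" by (simp_all add: mult.assoc)
  note ii = div_mod_lt[OF i'] and jj = div_mod_lt[OF j']
  note ii2 = div_mod_lt[OF i2] and jj2 = div_mod_lt[OF j2]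
  have i3: "i mod (rb*rc) < rb * rc" and j3: "j mod (cb*cc) < cb * cc" using ii2 jj2 by auto
  have e1: "i div (rb*rc) = i div rc div rb" "j div (cb*cc) = j div cc div cb"
    by (metis div_mult2_eq mult.commute)+
  have "i mod (rb*rc) = rc*(i div rc mod rb) + i mod rc" "j mod (cb*cc) = cc*(j div cc mod cb) + j mod cc"
    by (metis mod_mult2_eq mult.commute)+
  then have e2: "i mod (rb*rc) div rc = i div rc mod rb" "j mod (cb*cc) div cc = j div cc mod cb"
    using ii jj by simp_all
  have e3: "i mod (rb*rc) mod rc = i mod rc" "j mod (cb*cc) mod cc = j mod cc"
    by (simp_all add: mod_mod_cancel)
  have l: "kron A (kron B C) $$ (i,j) = A $$ (i div (rb*rc), j div (cb*cc)) *
     (B $$ (i mod (rb*rc) div rc, j mod (cb*cc) div cc) * C $$ (i mod (rb*rc) mod rc, j mod (cb*cc) mod cc))"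
    using A B C i2 j2 i3 j3 by (simp add: kron_entry)
  have "i div rc < ra * rb" "j div cc < ca * cb" using ii jj by auto
  then have r: "kron (kron A B) C $$ (i,j) = (A $$ (i div rc div rb, j div cc div cb) *
     B $$ (i div rc mod rb, j div cc mod cb)) * C $$ (i mod rc, j mod cc)"
    using A B C i' j' by (simp add: kron_entry)
  show "kron A (kron B C) $$ (i,j) = kron (kron A B) C $$ (i,j)"
    unfolding l r e1 e2 e3 by simp
qed (use A B C in auto)

lemma ps_Cons: "pauli_string (k # ks) = kron (pauli1 k) (pauli_string ks)"
  by (simp add: pauli_string_def)
lemma ps_Nil: "pauli_string [] = 1\<^sub>m 1"
  by (simp add: pauli_string_def)

lemma ps_carrier: "pauli_string ks \<in> carrier_mat (2 ^ length ks) (2 ^ length ks)"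
  by (induction ks) (auto simp: ps_Cons ps_Nil)

lemma ps_dims[simp]: "dim_row (pauli_string ks) = 2 ^ length ks" "dim_col (pauli_string ks) = 2 ^ length ks"
  using carrier_matD[OF ps_carrier[of ks]] by auto

lemma ps_append: "pauli_string (ks @ ls) = kron (pauli_string ks) (pauli_string ls)"
proof (induction ks)
  case Nil then show ?case by (simp only: ps_Nil append_Nil kron_one_left)
next
  case (Cons k ks)
  then show ?case
    by (simp add: ps_Cons kron_assoc[OF p1c ps_carrier ps_carrier])
qed

lemma ps_sq: "pauli_string ks * pauli_string ks = 1\<^sub>m (2 ^ length ks)"
proof (induction ks)
  case Nil then show ?case by (simp add: ps_Nil)
next
  case (Cons k ks)
  have "pauli1 k * pauli1 k = 1\<^sub>m 2"
    by (rule eq_matI) (auto simp: mult_entry[OF p1c p1c] p1_entry p1_sq simp del: index_mult_mat(1))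
  then show ?case
    by (simp add: ps_Cons kron_mult[OF p1c ps_carrier p1c ps_carrier] Cons kron_one_one)
qed

lemma ps_zero: "pauli_string (replicate n 0) = 1\<^sub>m (2 ^ n)"
proof (induction n)
  case 0 then show ?case by (simp add: ps_Nil)
next
  case (Suc n)
  have "pauli1 0 = 1\<^sub>m 2"
    by (rule eq_matI) (auto simp: p1_entry p1e_def)
  then show ?case by (simp add: ps_Cons Suc kron_one_one)
qed

lemma ps_Cons_entry: "i < 2 * 2 ^ length ks \<Longrightarrow> j < 2 * 2 ^ length ks \<Longrightarrow>
  pauli_string (k # ks) $$ (i,j) = p1e k (i div 2 ^ length ks) (j div 2 ^ length ks) *
     pauli_string ks $$ (i mod 2 ^ length ks, j mod 2 ^ length ks)"
  using div_mod_lt[of i 2 "2 ^ length ks"] div_mod_lt[of j 2 "2 ^ length ks"]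
  by (simp add: ps_Cons kron_entry p1_entry)

lemma ps_herm: "i < 2 ^ length ks \<Longrightarrow> j < 2 ^ length ks \<Longrightarrow>
   cnj (pauli_string ks $$ (i,j)) = pauli_string ks $$ (j,i)"
proof (induction ks arbitrary: i j)
  case Nil then show ?case by (simp add: ps_Nil)
next
  case (Cons k ks)
  note ii = div_mod_lt[of i 2 "2 ^ length ks"] and jj = div_mod_lt[of j 2 "2 ^ length ks"]
  show ?case using Cons.prems ii jj Cons.IH
    by (simp add: ps_Cons_entry p1_herm)
qed

lemma labels_0: "pauli_labels 0 = {[]}"
  by (auto simp: pauli_labels_def)

lemma labels_Suc: "pauli_labels (Suc n) = (\<lambda>(a,P). a # P) ` ({..<4} \<times> pauli_labels n)"
proof
  show "pauli_labels (Suc n) \<subseteq> (\<lambda>(a,P). a # P) ` ({..<4} \<times> pauli_labels n)"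
  proof
    fix xs assume xs: "xs \<in> pauli_labels (Suc n)"
    then obtain a P where e: "xs = a # P" by (cases xs) (auto simp: pauli_labels_def)
    then have "a < 4" "P \<in> pauli_labels n" using xs by (auto simp: pauli_labels_def)
    then show "xs \<in> (\<lambda>(a,P). a # P) ` ({..<4} \<times> pauli_labels n)" using e by force
  qed
  show "(\<lambda>(a,P). a # P) ` ({..<4} \<times> pauli_labels n) \<subseteq> pauli_labels (Suc n)"
    by (auto simp: pauli_labels_def)
qed

lemma finite_labels[simp]: "finite (pauli_labels n)"
proof -
  have "pauli_labels n \<subseteq> {xs. set xs \<subseteq> {0,1,2,3} \<and> length xs = n}" by (auto simp: pauli_labels_def)
  then show ?thesis by (rule finite_subset) (rule finite_lists_length_eq, simp)
qed

lemma sum_labels_Suc: "(\<Sum>x\<in>pauli_labels (Suc n). g x) = (\<Sum>a<4. \<Sum>P\<in>pauli_labels n. g (a # P))"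
proof -
  have "inj_on (\<lambda>(a,P). a # P) ({..<4::nat} \<times> pauli_labels n)" by (auto simp: inj_on_def)
  then have "(\<Sum>x\<in>pauli_labels (Suc n). g x) = (\<Sum>x\<in>{..<4} \<times> pauli_labels n. g ((\<lambda>(a,P). a # P) x))"
    unfolding labels_Suc using sum.reindex[of "\<lambda>(a,P). a # P" _ g] by (simp add: o_def)
  also have "\<dots> = (\<Sum>a<4. \<Sum>P\<in>pauli_labels n. g (a # P))"
    by (simp add: sum.cartesian_product split_def)
  finally show ?thesis .
qed

lemma labels_len: "P \<in> pauli_labels n \<Longrightarrow> length P = n"
  by (simp add: pauli_labels_def)

lemma mtrace_mult: "A \<in> carrier_mat r m \<Longrightarrow> B \<in> carrier_mat m r \<Longrightarrow>
   mtrace (A * B) = (\<Sum>i<r. \<Sum>k<m. A $$ (i,k) * B $$ (k,i))"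
  by (simp add: mtrace_def mult_entry del: index_mult_mat(1))

lemma ps_orth: "ks \<in> pauli_labels n \<Longrightarrow> ls \<in> pauli_labels n \<Longrightarrow>
  mtrace (pauli_string ks * pauli_string ls) = (if ks = ls then 2 ^ n else 0)"
proof (induction n arbitrary: ks ls)
  case 0 then show ?case by (simp add: labels_0 ps_Nil mtrace_def)
next
  case (Suc n)
  from Suc.prems obtain a P b Q where ks: "ks = a # P" and ls: "ls = b # Q" and a: "a < 4" and b: "b < 4"
     and P: "P \<in> pauli_labels n" and Q: "Q \<in> pauli_labels n"
    unfolding labels_Suc by auto
  have lP: "length P = n" "length Q = n" using P Q by (auto simp: labels_len)
  have cP: "pauli_string P \<in> carrier_mat (2^n) (2^n)" and cQ: "pauli_string Q \<in> carrier_mat (2^n) (2^n)"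
    using ps_carrier[of P] ps_carrier[of Q] lP by auto
  have "mtrace (pauli_string ks * pauli_string ls) =
     mtrace (kron (pauli1 a * pauli1 b) (pauli_string P * pauli_string Q))"
    unfolding ks ls ps_Cons using kron_mult[OF p1c cP p1c cQ] by simp
  also have "\<dots> = mtrace (pauli1 a * pauli1 b) * mtrace (pauli_string P * pauli_string Q)"
    by (rule mtrace_kron[OF mult_carrier_mat[OF p1c p1c] mult_carrier_mat[OF cP cQ]])
  also have "mtrace (pauli1 a * pauli1 b) = (if a = b then 2 else 0)"
    using a b by (simp add: mtrace_mult[OF p1c p1c] p1_entry p1_orth)
  finally show ?case using Suc.IH[OF P Q] ks ls by auto
qed

lemma ps_compl: "i < 2^n \<Longrightarrow> j < 2^n \<Longrightarrow> k < 2^n \<Longrightarrow> l < 2^n \<Longrightarrow>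
  (\<Sum>P\<in>pauli_labels n. pauli_string P $$ (i,j) * pauli_string P $$ (k,l)) = (if i = l \<and> j = k then 2^n else 0)"
proof (induction n arbitrary: i j k l)
  case 0 then show ?case by (simp add: labels_0 ps_Nil)
next
  case (Suc n)
  define N :: nat where "N = 2^n"
  have N: "0 < N" by (simp add: N_def)
  have lt: "i div N < 2" "j div N < 2" "k div N < 2" "l div N < 2"
     "i mod N < 2^n" "j mod N < 2^n" "k mod N < 2^n" "l mod N < 2^n"
    using Suc.prems N by (auto simp: N_def less_mult_imp_div_less)
  have "(\<Sum>P\<in>pauli_labels (Suc n). pauli_string P $$ (i,j) * pauli_string P $$ (k,l))
     = (\<Sum>a<4. \<Sum>P\<in>pauli_labels n. (p1e a (i div N) (j div N) * p1e a (k div N) (l div N)) *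
          (pauli_string P $$ (i mod N, j mod N) * pauli_string P $$ (k mod N, l mod N)))"
    unfolding sum_labels_Suc
    by (intro sum.cong refl) (use Suc.prems in \<open>auto simp: ps_Cons_entry labels_len N_def\<close>)
  also have "\<dots> = (\<Sum>a<4. p1e a (i div N) (j div N) * p1e a (k div N) (l div N)) *
        (\<Sum>P\<in>pauli_labels n. pauli_string P $$ (i mod N, j mod N) * pauli_string P $$ (k mod N, l mod N))"
    by (simp only: sum_product)
  also have "\<dots> = (if i div N = l div N \<and> j div N = k div N then 2 else 0) *
       (if i mod N = l mod N \<and> j mod N = k mod N then 2^n else 0)"
    using lt by (simp add: p1_compl Suc.IH N_def)
  also have "\<dots> = (if i = l \<and> j = k then 2^Suc n else 0)"
    using eq_div_mod_iff[OF N, of i l] eq_div_mod_iff[OF N, of j k] by auto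
  finally show ?case .
qed

definition qf :: "complex mat \<Rightarrow> nat \<Rightarrow> (nat \<Rightarrow> complex) \<Rightarrow> complex" where
  "qf A N f = (\<Sum>i<N. \<Sum>j<N. cnj (f i) * A $$ (i,j) * f j)"

lemma psd_qf:
  assumes "psd A" "A \<in> carrier_mat N N"
  shows "Im (qf A N f) = 0 \<and> Re (qf A N f) \<ge> 0"
proof -
  let ?v = "vec N f"
  have "?v \<in> carrier_vec (dim_row A)" using assms by auto
  with assms(1) have *: "Im (\<Sum>i<dim_row A. cnj (?v $ i) * (A *\<^sub>v ?v) $ i) = 0 \<and>
     Re (\<Sum>i<dim_row A. cnj (?v $ i) * (A *\<^sub>v ?v) $ i) \<ge> 0"
    unfolding psd_def Let_def by blast
  have eq: "(\<Sum>i<dim_row A. cnj (?v $ i) * (A *\<^sub>v ?v) $ i) = qf A N f"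
    using assms(2) unfolding qf_def
    by (auto simp: scalar_prod_def lessThan_atLeast0 sum_distrib_left mult.assoc intro!: sum.cong)
  show ?thesis using * unfolding eq .
qed

lemma qf_two:
  assumes "i < N" "j < N" "i \<noteq> j"
  shows "qf A N (\<lambda>t. if t = i then x else if t = j then y else 0) =
    cnj x * A $$ (i,i) * x + cnj x * A $$ (i,j) * y + cnj y * A $$ (j,i) * x + cnj y * A $$ (j,j) * y"
proof -
  have e: "(\<lambda>t. if t = i then x else if t = j then y else 0) = (\<lambda>t. (if t = i then x else 0) + (if t = j then y else 0))"
    using assms by auto
  show ?thesis using assms unfolding qf_def e
    by (simp add: distrib_left distrib_right sum.distrib if_distrib[of cnj] if_distrib[of "\<lambda>z. z * _"]
       if_distrib[of "\<lambda>z. _ * z"] sum.delta cong: if_cong)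
qed

lemma qf_one:
  assumes "i < N"
  shows "qf A N (\<lambda>t. if t = i then x else 0) = cnj x * A $$ (i,i) * x"
  using assms unfolding qf_def
  by (simp add: if_distrib[of cnj] if_distrib[of "\<lambda>z. z * _"] if_distrib[of "\<lambda>z. _ * z"] sum.delta cong: if_cong)

lemma psd_diag:
  assumes "psd A" "A \<in> carrier_mat N N" "i < N"
  shows "Im (A $$ (i,i)) = 0 \<and> Re (A $$ (i,i)) \<ge> 0"
  using psd_qf[OF assms(1,2), of "\<lambda>t. if t = i then 1 else 0"] qf_one[OF assms(3), of A 1] by simp

lemma psd_herm:
  assumes "psd A" "A \<in> carrier_mat N N" "i < N" "j < N"
  shows "cnj (A $$ (i,j)) = A $$ (j,i)"
proof (cases "i = j")
  case True then show ?thesis using psd_diag[OF assms(1,2,3)] by (simp add: complex_eq_iff)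
next
  case False
  have 1: "Im (A $$ (i,i) + A $$ (i,j) + A $$ (j,i) + A $$ (j,j)) = 0"
    using psd_qf[OF assms(1,2), of "\<lambda>t. if t = i then 1 else if t = j then 1 else 0"]
      qf_two[OF assms(3,4) False, of A 1 1] by simp
  have 2: "Im (A $$ (i,i) + \<i> * A $$ (i,j) - \<i> * A $$ (j,i) + A $$ (j,j)) = 0"
    using psd_qf[OF assms(1,2), of "\<lambda>t. if t = i then 1 else if t = j then \<i> else 0"]
      qf_two[OF assms(3,4) False, of A 1 \<i>] by (simp add: algebra_simps)
  show ?thesis using 1 2 psd_diag[OF assms(1,2,3)] psd_diag[OF assms(1,2,4)]
    by (simp add: complex_eq_iff)
qed

lemma quad_nonneg_disc:
  fixes a b c :: real
  assumes "\<And>t. a * t^2 - 2 * b * t + b * c \<ge> 0" "a \<ge> 0" "b \<ge> 0" "c \<ge> 0"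
  shows "b \<le> a * c"
proof (cases "b = 0")
  case True then show ?thesis using assms by simp
next
  case False
  then have b: "b > 0" using assms(3) by simp
  show ?thesis
  proof (cases "a = 0")
    case True
    have "0 \<le> - 2 * b * (c/2 + 1) + b * c" using assms(1)[of "c/2+1"] True by simp
    also have "\<dots> = - 2 * b" by (simp add: algebra_simps)
    finally show ?thesis using b by simp
  next
    case False
    then have a: "a > 0" using assms(2) by simp
    have "0 \<le> a * (b/a)^2 - 2 * b * (b/a) + b * c" by (rule assms(1))
    also have "\<dots> = b * (c - b / a)" using a by (simp add: field_simps power2_eq_square)
    finally have "c - b/a \<ge> 0" using b by (simp add: zero_le_mult_iff)
    then show ?thesis using a by (simp add: field_simps)
  qed
qed

lemma psd_minor:
  assumes "psd A" "A \<in> carrier_mat N N" "i < N" "j < N"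
  shows "cmod (A $$ (i,j))^2 \<le> Re (A $$ (i,i)) * Re (A $$ (j,j))"
proof (cases "i = j")
  case True
  then show ?thesis using psd_diag[OF assms(1,2,3)]
    by (simp add: cmod_def power2_eq_square)
next
  case False
  let ?z = "A $$ (j,i)"
  have h: "A $$ (i,j) = cnj ?z" using psd_herm[OF assms(1,2,4,3)] by simp
  have di: "A $$ (i,i) = of_real (Re (A $$ (i,i)))" and dj: "A $$ (j,j) = of_real (Re (A $$ (j,j)))"
    using psd_diag[OF assms(1,2,3)] psd_diag[OF assms(1,2,4)] by (simp_all add: complex_eq_iff)
  have zz: "cnj ?z * ?z = of_real (cmod ?z ^ 2)" using complex_norm_square[of ?z] by (simp add: mult.commute)
  have "\<And>t. Re (A $$ (i,i)) * t^2 - 2 * (cmod ?z)^2 * t + (cmod ?z)^2 * Re (A $$ (j,j)) \<ge> 0"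
  proof -
    fix t :: real
    have q: "qf A N (\<lambda>s. if s = i then of_real t else if s = j then - ?z else 0) =
      of_real (Re (A $$ (i,i)) * t^2 - 2 * (cmod ?z)^2 * t + (cmod ?z)^2 * Re (A $$ (j,j)))"
      unfolding qf_two[OF assms(3,4) False]
      apply (subst di, subst dj, unfold h)
      using zz by (simp add: algebra_simps power2_eq_square)
    show "Re (A $$ (i,i)) * t^2 - 2 * (cmod ?z)^2 * t + (cmod ?z)^2 * Re (A $$ (j,j)) \<ge> 0"
      using psd_qf[OF assms(1,2), of "\<lambda>s. if s = i then of_real t else if s = j then - ?z else 0"]
      unfolding q by simp
  qed
  then have "(cmod ?z)^2 \<le> Re (A $$ (i,i)) * Re (A $$ (j,j))"
    by (rule quad_nonneg_disc) (use psd_diag[OF assms(1,2,3)] psd_diag[OF assms(1,2,4)] in auto)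
  then show ?thesis using h by simp
qed

lemma trace_real:
  assumes A: "A \<in> carrier_mat N N" and B: "B \<in> carrier_mat N N"
    and hA: "\<And>i j. i < N \<Longrightarrow> j < N \<Longrightarrow> cnj (A $$ (i,j)) = A $$ (j,i)"
    and hB: "\<And>i j. i < N \<Longrightarrow> j < N \<Longrightarrow> cnj (B $$ (i,j)) = B $$ (j,i)"
  shows "Im (mtrace (A * B)) = 0"
proof -
  have "cnj (mtrace (A * B)) = (\<Sum>i<N. \<Sum>k<N. A $$ (k,i) * B $$ (i,k))"
    unfolding mtrace_mult[OF A B] by (simp add: hA hB)
  also have "\<dots> = mtrace (A * B)"
    unfolding mtrace_mult[OF A B] by (rule sum.swap)
  finally show ?thesis by (metis Reals_cnj_iff complex_is_Real_iff)
qed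

lemma purity:
  assumes "psd A" "A \<in> carrier_mat N N" "mtrace A = 1"
  shows "(\<Sum>i<N. \<Sum>j<N. cmod (A $$ (i,j))^2) \<le> 1"
proof -
  have "(\<Sum>i<N. \<Sum>j<N. cmod (A $$ (i,j))^2) \<le> (\<Sum>i<N. \<Sum>j<N. Re (A $$ (i,i)) * Re (A $$ (j,j)))"
    by (intro sum_mono psd_minor[OF assms(1,2)]) auto
  also have "\<dots> = (\<Sum>i<N. Re (A $$ (i,i))) * (\<Sum>j<N. Re (A $$ (j,j)))" by (simp add: sum_product)
  also have "(\<Sum>i<N. Re (A $$ (i,i))) = Re (mtrace A)" using assms(2) by (simp add: mtrace_def)
  finally show ?thesis using assms(3) by simp
qed

lemma sum_dl: "b < (N::nat) \<Longrightarrow> (\<Sum>k<N. f k * (if b = k then 1 else 0)) = (f b :: complex)"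
proof -
  assume b: "b < N"
  have "(\<Sum>k<N. f k * (if b = k then 1 else 0)) = (\<Sum>k<N. if b = k then f k else 0)"
    by (intro sum.cong) auto
  then show ?thesis using b by simp
qed
lemma sum_dr: "b < (N::nat) \<Longrightarrow> (\<Sum>k<N. (if b = k then 1 else 0) * f k) = (f b :: complex)"
  using sum_dl[of b N f] by (simp add: mult.commute)
lemma sum_d2: "b < (N::nat) \<Longrightarrow> (\<Sum>k<N. (if a = k then 1 else 0) * (if b = k then 1 else 0)) = (if a = b then 1 else (0::complex))"
  using sum_dl[of b N "\<lambda>k. if a = k then 1 else 0"] by simp

lemma pauli_bound:
  assumes "psd A" and A: "A \<in> carrier_mat (2 ^ length P) (2 ^ length P)" and tr: "mtrace A = 1"
    and s: "s = 1 \<or> s = -1"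
  shows "1 + s * Re (mtrace (pauli_string P * A)) \<ge> 0"
proof -
  define N :: nat where "N = 2 ^ length P"
  define p where "p a b = pauli_string P $$ (a,b)" for a b
  have AN: "A \<in> carrier_mat N N" using A by (simp add: N_def)
  have PN: "pauli_string P \<in> carrier_mat N N" by (simp add: N_def ps_carrier)
  have herm: "cnj (p a b) = p b a" if "a < N" "b < N" for a b
    using ps_herm that by (simp add: p_def N_def)
  have sq: "(\<Sum>k<N. p b k * p k a) = (if b = a then 1 else 0)" if "a < N" "b < N" for a b
  proof -
    have "(pauli_string P * pauli_string P) $$ (b,a) = (\<Sum>k<N. p b k * p k a)"
      using that by (simp add: mult_entry[OF PN PN] p_def del: index_mult_mat(1))
    then show ?thesis using ps_sq[of P] that by (simp add: N_def)
  qed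
  have ss: "(of_real s :: complex) * of_real s = 1" using s by auto
  define f where "f k t = (if t = k then 1 else 0) + of_real s * p t k" for k t
  have inner: "(\<Sum>k<N. cnj (f k a) * f k b) = 2 * (if a = b then 1 else 0) + 2 * of_real s * p b a"
    if a: "a < N" and b: "b < N" for a b
  proof -
    have "(\<Sum>k<N. cnj (f k a) * f k b) = (\<Sum>k<N. ((if a = k then 1 else 0) + of_real s * p k a) * ((if b = k then 1 else 0) + of_real s * p b k))"
      by (intro sum.cong refl) (auto simp: f_def herm a)
    also have "\<dots> = (\<Sum>k<N. (if a = k then 1 else 0) * (if b = k then 1 else 0)) + of_real s * (\<Sum>k<N. (if a = k then 1 else 0) * p b k)
       + of_real s * (\<Sum>k<N. p k a * (if b = k then 1 else 0)) + (of_real s * of_real s) * (\<Sum>k<N. p b k * p k a)"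
      by (simp add: algebra_simps sum.distrib sum_distrib_left)
    also have "\<dots> = (if a = b then 1 else 0) + of_real s * p b a + of_real s * p b a + (if b = a then 1 else 0)"
      unfolding ss sq[OF a b] using a b by (simp add: sum_dl sum_dr sum_d2)
    finally show ?thesis by simp
  qed
  have "(\<Sum>k<N. qf A N (f k)) = (\<Sum>k<N. \<Sum>a<N. \<Sum>b<N. cnj (f k a) * A $$ (a,b) * f k b)"
    unfolding qf_def ..
  also have "\<dots> = (\<Sum>a<N. \<Sum>k<N. \<Sum>b<N. cnj (f k a) * A $$ (a,b) * f k b)"
    by (rule sum.swap)
  also have "\<dots> = (\<Sum>a<N. \<Sum>b<N. \<Sum>k<N. cnj (f k a) * A $$ (a,b) * f k b)"
    by (intro sum.cong refl sum.swap)
  also have "\<dots> = (\<Sum>a<N. \<Sum>b<N. A $$ (a,b) * (\<Sum>k<N. cnj (f k a) * f k b))"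
    by (intro sum.cong refl) (simp add: sum_distrib_left algebra_simps)
  also have "\<dots> = (\<Sum>a<N. \<Sum>b<N. 2 * (A $$ (a,b) * (if a = b then 1 else 0)) + 2 * of_real s * (p b a * A $$ (a,b)))"
  proof (intro sum.cong refl)
    fix a b assume ab: "a \<in> {..<N}" "b \<in> {..<N}"
    have i: "(\<Sum>k<N. cnj (f k a) * f k b) = 2 * (if a = b then 1 else 0) + 2 * of_real s * p b a"
      using inner ab by simp
    show "A $$ (a,b) * (\<Sum>k<N. cnj (f k a) * f k b) = 2 * (A $$ (a,b) * (if a = b then 1 else 0)) + 2 * of_real s * (p b a * A $$ (a,b))"
      unfolding i by (simp add: algebra_simps)
  qed
  also have "\<dots> = (\<Sum>a<N. 2 * A $$ (a,a) + 2 * of_real s * (\<Sum>b<N. p b a * A $$ (a,b)))"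
    by (intro sum.cong refl) (simp add: sum.distrib sum_distrib_left[symmetric] sum_dl)
  also have "\<dots> = 2 * mtrace A + 2 * of_real s * (\<Sum>a<N. \<Sum>b<N. p b a * A $$ (a,b))"
    using AN by (simp add: sum.distrib sum_distrib_left mtrace_def)
  also have "(\<Sum>a<N. \<Sum>b<N. p b a * A $$ (a,b)) = (\<Sum>b<N. \<Sum>a<N. p b a * A $$ (a,b))"
    by (rule sum.swap)
  also have "\<dots> = mtrace (pauli_string P * A)"
    by (simp add: mtrace_mult[OF PN AN] p_def)
  finally have eq: "(\<Sum>k<N. qf A N (f k)) = 2 + 2 * of_real s * mtrace (pauli_string P * A)" using tr by simp
  have "Re (\<Sum>k<N. qf A N (f k)) \<ge> 0"
    unfolding Re_sum by (intro sum_nonneg) (use psd_qf[OF assms(1) AN] in auto)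
  then show ?thesis unfolding eq by simp
qed

abbreviation tc :: "complex mat \<Rightarrow> nat list \<Rightarrow> complex" where
  "tc A P \<equiv> mtrace (pauli_string P * A)"

lemma zero_label: "replicate n 0 \<in> pauli_labels n"
  by (auto simp: pauli_labels_def set_replicate_conv_if)

lemma dm_herm: "density_matrix n A \<Longrightarrow> i < 2^n \<Longrightarrow> j < 2^n \<Longrightarrow> cnj (A $$ (i,j)) = A $$ (j,i)"
  unfolding density_matrix_def using psd_herm by blast

lemma tc_real: "density_matrix n A \<Longrightarrow> P \<in> pauli_labels n \<Longrightarrow> Im (tc A P) = 0"
  using trace_real[of "pauli_string P" "2^n" A] ps_carrier[of P] ps_herm[of _ P] dm_herm[of n A]
  by (auto simp: labels_len density_matrix_def)

lemma tc_of_real: "density_matrix n A \<Longrightarrow> P \<in> pauli_labels n \<Longrightarrow> tc A P = of_real (Re (tc A P))"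
  using tc_real by (simp add: complex_eq_iff)

lemma tc_zero: "A \<in> carrier_mat (2^n) (2^n) \<Longrightarrow> tc A (replicate n 0) = mtrace A"
  by (simp add: ps_zero)

lemma tc_bound: "density_matrix n A \<Longrightarrow> P \<in> pauli_labels n \<Longrightarrow> \<bar>Re (tc A P)\<bar> \<le> 1"
  using pauli_bound[of A P 1] pauli_bound[of A P "-1"] by (auto simp: density_matrix_def labels_len)

lemma expansion:
  assumes A: "A \<in> carrier_mat (2^n) (2^n)" and i: "i < 2^n" and j: "j < 2^n"
  shows "(\<Sum>P\<in>pauli_labels n. tc A P * pauli_string P $$ (i,j)) = 2^n * A $$ (i,j)"
proof -
  have "(\<Sum>P\<in>pauli_labels n. tc A P * pauli_string P $$ (i,j)) =
     (\<Sum>P\<in>pauli_labels n. \<Sum>a<2^n. \<Sum>b<2^n. pauli_string P $$ (a,b) * A $$ (b,a) * pauli_string P $$ (i,j))"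
  proof (intro sum.cong refl)
    fix P assume P: "P \<in> pauli_labels n"
    have "pauli_string P \<in> carrier_mat (2^n) (2^n)" using ps_carrier[of P] P by (simp add: labels_len)
    then show "tc A P * pauli_string P $$ (i,j) = (\<Sum>a<2^n. \<Sum>b<2^n. pauli_string P $$ (a,b) * A $$ (b,a) * pauli_string P $$ (i,j))"
      by (simp add: mtrace_mult[OF _ A] sum_distrib_right)
  qed
  also have "\<dots> = (\<Sum>a<2^n. \<Sum>P\<in>pauli_labels n. \<Sum>b<2^n. pauli_string P $$ (a,b) * A $$ (b,a) * pauli_string P $$ (i,j))"
    by (rule sum.swap)
  also have "\<dots> = (\<Sum>a<2^n. \<Sum>b<2^n. \<Sum>P\<in>pauli_labels n. pauli_string P $$ (a,b) * A $$ (b,a) * pauli_string P $$ (i,j))"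
    by (intro sum.cong refl sum.swap)
  also have "\<dots> = (\<Sum>a<2^n. \<Sum>b<2^n. A $$ (b,a) * (\<Sum>P\<in>pauli_labels n. pauli_string P $$ (a,b) * pauli_string P $$ (i,j)))"
    by (intro sum.cong refl) (simp add: sum_distrib_left mult_ac)
  also have "\<dots> = (\<Sum>a<2^n. \<Sum>b<2^n. A $$ (b,a) * (if a = j \<and> b = i then 2^n else 0))"
    by (intro sum.cong refl) (simp add: ps_compl i j)
  also have "\<dots> = (\<Sum>a<2^n. if a = j then A $$ (i,a) * 2^n else 0)"
  proof (intro sum.cong refl)
    fix a assume "a \<in> {..<(2::nat)^n}"
    have "(\<Sum>b<2^n. A $$ (b,a) * (if a = j \<and> b = i then 2^n else 0)) = (\<Sum>b<2^n. if b = i then (if a = j then A $$ (i,a) * 2^n else 0) else 0)"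
      by (intro sum.cong refl) auto
    then show "(\<Sum>b<2^n. A $$ (b,a) * (if a = j \<and> b = i then 2^n else 0)) = (if a = j then A $$ (i,a) * 2^n else 0)"
      using i by simp
  qed
  also have "\<dots> = 2^n * A $$ (i,j)" using j by simp
  finally show ?thesis .
qed

lemma sumsq:
  assumes A: "A \<in> carrier_mat (2^n) (2^n)"
  shows "(\<Sum>P\<in>pauli_labels n. tc A P * cnj (tc A P)) = 2^n * (\<Sum>c<2^n. \<Sum>e<2^n. A $$ (e,c) * cnj (A $$ (e,c)))"
proof -
  have cj: "cnj (tc A P) = (\<Sum>c<2^n. \<Sum>e<2^n. pauli_string P $$ (e,c) * cnj (A $$ (e,c)))" if P: "P \<in> pauli_labels n" for P
  proof -
    have PC: "pauli_string P \<in> carrier_mat (2^n) (2^n)" using ps_carrier[of P] P by (simp add: labels_len)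
    have "cnj (tc A P) = (\<Sum>c<2^n. \<Sum>e<2^n. cnj (pauli_string P $$ (c,e)) * cnj (A $$ (e,c)))"
      by (simp add: mtrace_mult[OF PC A])
    also have "\<dots> = (\<Sum>c<2^n. \<Sum>e<2^n. pauli_string P $$ (e,c) * cnj (A $$ (e,c)))"
      using P by (intro sum.cong refl) (simp add: ps_herm labels_len)
    finally show ?thesis .
  qed
  have "(\<Sum>P\<in>pauli_labels n. tc A P * cnj (tc A P)) =
     (\<Sum>P\<in>pauli_labels n. \<Sum>c<2^n. \<Sum>e<2^n. cnj (A $$ (e,c)) * (tc A P * pauli_string P $$ (e,c)))"
    by (intro sum.cong refl) (simp add: cj sum_distrib_left algebra_simps)
  also have "\<dots> = (\<Sum>c<2^n. \<Sum>P\<in>pauli_labels n. \<Sum>e<2^n. cnj (A $$ (e,c)) * (tc A P * pauli_string P $$ (e,c)))"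
    by (rule sum.swap)
  also have "\<dots> = (\<Sum>c<2^n. \<Sum>e<2^n. \<Sum>P\<in>pauli_labels n. cnj (A $$ (e,c)) * (tc A P * pauli_string P $$ (e,c)))"
    by (intro sum.cong refl sum.swap)
  also have "\<dots> = (\<Sum>c<2^n. \<Sum>e<2^n. cnj (A $$ (e,c)) * (2^n * A $$ (e,c)))"
    by (intro sum.cong refl) (simp add: sum_distrib_left[symmetric] expansion[OF A])
  also have "\<dots> = 2^n * (\<Sum>c<2^n. \<Sum>e<2^n. A $$ (e,c) * cnj (A $$ (e,c)))"
    by (simp add: sum_distrib_left algebra_simps)
  finally show ?thesis .
qed

lemma sum_sq_bound:
  assumes "density_matrix n A"
  shows "(\<Sum>P\<in>pauli_labels n. (Re (tc A P))^2) \<le> 2^n"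
proof -
  have A: "A \<in> carrier_mat (2^n) (2^n)" "psd A" "mtrace A = 1" using assms by (auto simp: density_matrix_def)
  have "(\<Sum>P\<in>pauli_labels n. (Re (tc A P))^2) = Re (\<Sum>P\<in>pauli_labels n. tc A P * cnj (tc A P))"
    unfolding Re_sum by (intro sum.cong refl) (simp add: tc_real[OF assms] power2_eq_square)
  also have "\<dots> = 2^n * (\<Sum>c<2^n. \<Sum>e<2^n. cmod (A $$ (e,c))^2)"
    unfolding sumsq[OF A(1)] by (simp add: Re_sum complex_mult_cnj cmod_power2)
  also have "\<dots> = 2^n * (\<Sum>e<2^n. \<Sum>c<2^n. cmod (A $$ (e,c))^2)"
    by (subst sum.swap) simp
  also have "\<dots> \<le> 2^n * 1"
    by (intro mult_left_mono purity[OF A(2) A(1) A(3)]) auto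
  finally show ?thesis by simp
qed

lemma stab_tc:
  assumes G: "G \<subseteq> pauli_labels n - {replicate n 0}"
    and chi: "\<chi> = mat (2 ^ n) (2 ^ n) (\<lambda>(i, j). (if i = j then 1 else 0) / 2 ^ n
              + (1 / 2 ^ n) * (\<Sum>P\<in>G. \<phi> P * pauli_string P $$ (i, j)))"
    and P: "P \<in> pauli_labels n"
  shows "tc \<chi> P = (if P = replicate n 0 then 1 else 0) + (if P \<in> G then \<phi> P else 0)"
proof -
  define z where "z = replicate n (0::nat)"
  define H where "H = insert z G"
  define \<psi> where "\<psi> Q = (if Q = z then 1 else \<phi> Q)" for Q
  have zG: "z \<notin> G" using G by (auto simp: z_def)
  have finG: "finite G" using G finite_subset[OF _ finite_labels] by blast
  have HL: "H \<subseteq> pauli_labels n" using G zero_label by (auto simp: H_def z_def)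
  have finH: "finite H" using finG by (simp add: H_def)
  have PC: "pauli_string P \<in> carrier_mat (2^n) (2^n)" using ps_carrier[of P] P by (simp add: labels_len)
  have chiC: "\<chi> \<in> carrier_mat (2^n) (2^n)" using chi by simp
  have ent: "\<chi> $$ (b,a) = (1/2^n) * (\<Sum>Q\<in>H. \<psi> Q * pauli_string Q $$ (b,a))" if "a < 2^n" "b < 2^n" for a b
  proof -
    have "(\<Sum>Q\<in>H. \<psi> Q * pauli_string Q $$ (b,a)) = \<psi> z * pauli_string z $$ (b,a) + (\<Sum>Q\<in>G. \<psi> Q * pauli_string Q $$ (b,a))"
      unfolding H_def using finG zG by simp
    also have "(\<Sum>Q\<in>G. \<psi> Q * pauli_string Q $$ (b,a)) = (\<Sum>Q\<in>G. \<phi> Q * pauli_string Q $$ (b,a))"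
      using zG by (intro sum.cong refl) (auto simp: \<psi>_def)
    finally show ?thesis using that chi by (simp add: \<psi>_def z_def ps_zero field_simps)
  qed
  have "tc \<chi> P = (\<Sum>a<2^n. \<Sum>b<2^n. pauli_string P $$ (a,b) * ((1/2^n) * (\<Sum>Q\<in>H. \<psi> Q * pauli_string Q $$ (b,a))))"
    unfolding mtrace_mult[OF PC chiC] by (intro sum.cong refl) (simp add: ent)
  also have "\<dots> = (\<Sum>a<2^n. \<Sum>b<2^n. \<Sum>Q\<in>H. (1/2^n) * \<psi> Q * (pauli_string P $$ (a,b) * pauli_string Q $$ (b,a)))"
    by (simp add: sum_distrib_left mult_ac)
  also have "\<dots> = (\<Sum>a<2^n. \<Sum>Q\<in>H. \<Sum>b<2^n. (1/2^n) * \<psi> Q * (pauli_string P $$ (a,b) * pauli_string Q $$ (b,a)))"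
    by (intro sum.cong refl sum.swap)
  also have "\<dots> = (\<Sum>Q\<in>H. \<Sum>a<2^n. \<Sum>b<2^n. (1/2^n) * \<psi> Q * (pauli_string P $$ (a,b) * pauli_string Q $$ (b,a)))"
    by (rule sum.swap)
  also have "\<dots> = (\<Sum>Q\<in>H. (1/2^n) * \<psi> Q * mtrace (pauli_string P * pauli_string Q))"
  proof (intro sum.cong refl)
    fix Q assume "Q \<in> H"
    then have QC: "pauli_string Q \<in> carrier_mat (2^n) (2^n)" using ps_carrier[of Q] HL by (auto simp: labels_len)
    show "(\<Sum>a<2^n. \<Sum>b<2^n. (1/2^n) * \<psi> Q * (pauli_string P $$ (a,b) * pauli_string Q $$ (b,a))) =
       (1/2^n) * \<psi> Q * mtrace (pauli_string P * pauli_string Q)"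
      by (simp add: mtrace_mult[OF PC QC] sum_distrib_left)
  qed
  also have "\<dots> = (\<Sum>Q\<in>H. if P = Q then \<psi> Q else 0)"
    using HL P by (intro sum.cong refl) (auto simp: ps_orth)
  also have "\<dots> = (if P \<in> H then \<psi> P else 0)"
    using finH by simp
  also have "\<dots> = (if P = replicate n 0 then 1 else 0) + (if P \<in> G then \<phi> P else 0)"
    using zG by (auto simp: H_def \<psi>_def z_def)
  finally show ?thesis .
qed

lemma ratio_one:
  fixes a :: "nat list \<Rightarrow> real"
  assumes "finite L" "z \<in> L" "a z = 1" "\<And>P. P \<in> L \<Longrightarrow> a P ^ 4 = a P ^ 2"
  shows "- log 2 ((\<Sum>P\<in>L. a P ^ 4) / (\<Sum>P\<in>L. a P ^ 2)) = 0"
proof -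
  have "(\<Sum>P\<in>L. a P ^ 2) \<ge> a z ^ 2"
    by (rule member_le_sum) (use assms in auto)
  then have pos: "(\<Sum>P\<in>L. a P ^ 2) > 0" using assms(3) by simp
  have "(\<Sum>P\<in>L. a P ^ 4) = (\<Sum>P\<in>L. a P ^ 2)" using assms(4) by simp
  then show ?thesis using pos by simp
qed

lemma sums_pos:
  assumes "density_matrix n A"
  shows "(\<Sum>P\<in>pauli_labels n. Re (tc A P) ^ 4) \<ge> 1" "(\<Sum>P\<in>pauli_labels n. Re (tc A P) ^ 2) \<ge> 1"
proof -
  have z: "Re (tc A (replicate n 0)) = 1" using assms by (simp add: tc_zero density_matrix_def)
  have "(\<Sum>P\<in>pauli_labels n. Re (tc A P) ^ 4) \<ge> Re (tc A (replicate n 0)) ^ 4"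
    by (rule member_le_sum) (auto simp: zero_label)
  then show "(\<Sum>P\<in>pauli_labels n. Re (tc A P) ^ 4) \<ge> 1" using z by simp
  have "(\<Sum>P\<in>pauli_labels n. Re (tc A P) ^ 2) \<ge> Re (tc A (replicate n 0)) ^ 2"
    by (rule member_le_sum) (auto simp: zero_label)
  then show "(\<Sum>P\<in>pauli_labels n. Re (tc A P) ^ 2) \<ge> 1" using z by simp
qed

lemma stab_M2t:
  assumes "stabilizer_state n \<chi>"
  shows "M2t n \<chi> = 0 \<and> density_matrix n \<chi>"
proof -
  from assms obtain G \<phi> where G: "G \<subseteq> pauli_labels n - {replicate n 0}"
    and ph: "\<forall>P\<in>G. \<phi> P \<in> {-1, 1 :: complex}"
    and chi: "\<chi> = mat (2 ^ n) (2 ^ n) (\<lambda>(i, j). (if i = j then 1 else 0) / 2 ^ n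
              + (1 / 2 ^ n) * (\<Sum>P\<in>G. \<phi> P * pauli_string P $$ (i, j)))"
    and psd: "psd \<chi>"
    unfolding stabilizer_state_def by blast
  have tcv: "tc \<chi> P = (if P = replicate n 0 then 1 else 0) + (if P \<in> G then \<phi> P else 0)" if "P \<in> pauli_labels n" for P
    by (rule stab_tc[OF G chi that])
  have "M2t n \<chi> = 0"
    unfolding M2t_def
  proof (rule ratio_one[OF finite_labels zero_label])
    show "Re (tc \<chi> (replicate n 0)) = 1" using tcv[OF zero_label] G by auto
    fix P assume P: "P \<in> pauli_labels n"
    show "Re (tc \<chi> P) ^ 4 = Re (tc \<chi> P) ^ 2"
      using tcv[OF P] G ph by (cases "P \<in> G") auto
  qed
  moreover have "mtrace \<chi> = 1"
  proof -
    have zG: "replicate n 0 \<notin> G" using G by auto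
    have chiC: "\<chi> \<in> carrier_mat (2^n) (2^n)" using chi by simp
    show ?thesis using tcv[OF zero_label] zG tc_zero[OF chiC] by simp
  qed
  ultimately show ?thesis using psd chi by (simp add: density_matrix_def)
qed

lemma M2t_zero_stab:
  assumes dm: "density_matrix n \<rho>" and M: "M2t n \<rho> = 0"
  shows "stabilizer_state n \<rho>"
proof -
  define a where "a P = Re (tc \<rho> P)" for P
  define L where "L = pauli_labels n"
  define z where "z = replicate n (0::nat)"
  have finL: "finite L" by (simp add: L_def)
  have zL: "z \<in> L" by (simp add: L_def z_def zero_label)
  have \<rho>C: "\<rho> \<in> carrier_mat (2^n) (2^n)" and tr: "mtrace \<rho> = 1" and psd: "psd \<rho>"
    using dm by (auto simp: density_matrix_def)
  have az: "a z = 1" using tc_zero[OF \<rho>C] tr by (simp add: a_def z_def)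
  have S4: "(\<Sum>P\<in>L. a P ^ 4) \<ge> 1" and S2: "(\<Sum>P\<in>L. a P ^ 2) \<ge> 1"
    using sums_pos[OF dm] by (auto simp: a_def L_def)
  have "log 2 ((\<Sum>P\<in>L. a P ^ 4) / (\<Sum>P\<in>L. a P ^ 2)) = 0"
    using M by (simp add: M2t_def a_def L_def)
  then have "ln ((\<Sum>P\<in>L. a P ^ 4) / (\<Sum>P\<in>L. a P ^ 2)) = 0" by (simp add: log_def)
  then have "(\<Sum>P\<in>L. a P ^ 4) / (\<Sum>P\<in>L. a P ^ 2) = 1" using S4 S2 by simp
  then have eq: "(\<Sum>P\<in>L. a P ^ 4) = (\<Sum>P\<in>L. a P ^ 2)" using S2 by (simp add: divide_eq_1_iff)
  have bnd: "\<bar>a P\<bar> \<le> 1" if "P \<in> L" for P using tc_bound[OF dm] that by (simp add: a_def L_def)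
  have nn: "a P ^ 2 - a P ^ 4 \<ge> 0" if "P \<in> L" for P
  proof -
    have "a P ^ 2 \<le> 1" using bnd[OF that] abs_square_le_1 by blast
    then have "a P ^ 2 * a P ^ 2 \<le> a P ^ 2 * 1" by (intro mult_left_mono) auto
    then show ?thesis by (simp add: power2_eq_square power4_eq_xxxx mult_ac)
  qed
  have "(\<Sum>P\<in>L. a P ^ 2 - a P ^ 4) = 0" using eq by (simp add: sum_subtractf)
  then have each: "a P ^ 2 - a P ^ 4 = 0" if "P \<in> L" for P
    using sum_nonneg_eq_0_iff[OF finL, of "\<lambda>P. a P ^ 2 - a P ^ 4"] nn that by blast
  have vals: "a P = 0 \<or> a P = 1 \<or> a P = -1" if "P \<in> L" for P
  proof -
    have "a P ^ 2 * (1 - a P ^ 2) = 0" using each[OF that] by (simp add: algebra_simps power4_eq_xxxx power2_eq_square)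
    then have "a P = 0 \<or> a P ^ 2 = 1" by auto
    then show ?thesis by (auto simp: power2_eq_1_iff)
  qed
  define G where "G = {P \<in> L - {z}. a P \<noteq> 0}"
  define \<phi> where "\<phi> P = tc \<rho> P" for P
  have tcr: "tc \<rho> P = of_real (a P)" if "P \<in> L" for P using tc_of_real[OF dm] that by (simp add: a_def L_def)
  have GL: "G \<subseteq> pauli_labels n - {replicate n 0}" by (auto simp: G_def L_def z_def)
  have finG: "finite G" using finL by (simp add: G_def)
  have zG: "z \<notin> G" by (simp add: G_def)
  have ph: "\<forall>P\<in>G. \<phi> P \<in> {-1, 1 :: complex}"
  proof
    fix P assume P: "P \<in> G"
    then have "P \<in> L" "a P \<noteq> 0" by (auto simp: G_def)
    then have "a P = 1 \<or> a P = -1" using vals by blast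
    then show "\<phi> P \<in> {-1, 1 :: complex}" using tcr[OF \<open>P \<in> L\<close>] by (auto simp: \<phi>_def)
  qed
  have card: "card G \<le> 2 ^ n - 1"
  proof -
    have "(\<Sum>P\<in>L. a P ^ 2) = (\<Sum>P\<in>L. if P \<in> insert z G then 1 else 0)"
    proof (intro sum.cong refl)
      fix P assume P: "P \<in> L"
      show "a P ^ 2 = (if P \<in> insert z G then 1 else 0)"
        using vals[OF P] az P by (auto simp: G_def)
    qed
    also have "\<dots> = real (card {P \<in> L. P \<in> insert z G})"
      using sum.inter_filter[OF finL, of "\<lambda>_. 1::real" "\<lambda>P. P \<in> insert z G"] by simp
    also have "{P \<in> L. P \<in> insert z G} = insert z G" using zL by (auto simp: G_def)
    finally have "real (card (insert z G)) \<le> 2^n"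
      using sum_sq_bound[OF dm] by (simp add: a_def L_def)
    then have "real (card G + 1) \<le> real ((2::nat)^n)" using finG zG by simp
    then have "card G + 1 \<le> 2^n" by (simp only: of_nat_le_iff)
    then show ?thesis by simp
  qed
  have mat_eq: "\<rho> = mat (2 ^ n) (2 ^ n) (\<lambda>(i, j). (if i = j then 1 else 0) / 2 ^ n
              + (1 / 2 ^ n) * (\<Sum>P\<in>G. \<phi> P * pauli_string P $$ (i, j)))"
  proof (rule eq_matI)
    fix i j assume "i < dim_row (mat (2 ^ n) (2 ^ n) (\<lambda>(i, j). (if i = j then 1 else 0) / 2 ^ n
              + (1 / 2 ^ n) * (\<Sum>P\<in>G. \<phi> P * pauli_string P $$ (i, j))))"
      "j < dim_col (mat (2 ^ n) (2 ^ n) (\<lambda>(i, j). (if i = j then 1 else 0) / 2 ^ n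
              + (1 / 2 ^ n) * (\<Sum>P\<in>G. \<phi> P * pauli_string P $$ (i, j))))"
    then have i: "i < 2^n" and j: "j < 2^n" by auto
    have "(\<Sum>P\<in>L. tc \<rho> P * pauli_string P $$ (i,j)) = tc \<rho> z * pauli_string z $$ (i,j) + (\<Sum>P\<in>L - {z}. tc \<rho> P * pauli_string P $$ (i,j))"
      using finL zL by (simp add: sum.remove)
    also have "(\<Sum>P\<in>L - {z}. tc \<rho> P * pauli_string P $$ (i,j)) = (\<Sum>P\<in>G. \<phi> P * pauli_string P $$ (i,j))"
    proof -
      have "(\<Sum>P\<in>G. tc \<rho> P * pauli_string P $$ (i,j)) = (\<Sum>P\<in>L - {z}. tc \<rho> P * pauli_string P $$ (i,j))"
        by (rule sum.mono_neutral_left) (use finL tcr in \<open>auto simp: G_def\<close>)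
      then show ?thesis by (simp add: \<phi>_def)
    qed
    also have "tc \<rho> z * pauli_string z $$ (i,j) = (if i = j then 1 else 0)"
      using az tcr[OF zL] i j by (simp add: z_def ps_zero)
    finally have "2^n * \<rho> $$ (i,j) = (if i = j then 1 else 0) + (\<Sum>P\<in>G. \<phi> P * pauli_string P $$ (i,j))"
      using expansion[OF \<rho>C i j] by (simp add: L_def)
    then show "\<rho> $$ (i,j) = mat (2 ^ n) (2 ^ n) (\<lambda>(i, j). (if i = j then 1 else 0) / 2 ^ n
              + (1 / 2 ^ n) * (\<Sum>P\<in>G. \<phi> P * pauli_string P $$ (i, j))) $$ (i,j)"
      using i j by (simp add: field_simps)
  qed (use \<rho>C in auto)
  show ?thesis unfolding stabilizer_state_def
    using GL card ph mat_eq psd by blast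
qed

lemma labels_add: "pauli_labels (m + k) = (\<lambda>(P,Q). P @ Q) ` (pauli_labels m \<times> pauli_labels k)"
proof
  show "pauli_labels (m + k) \<subseteq> (\<lambda>(P,Q). P @ Q) ` (pauli_labels m \<times> pauli_labels k)"
  proof
    fix R assume R: "R \<in> pauli_labels (m + k)"
    have "take m R \<in> pauli_labels m" "drop m R \<in> pauli_labels k"
      using R set_take_subset[of m R] set_drop_subset[of m R] by (auto simp: pauli_labels_def)
    moreover have "R = take m R @ drop m R" by simp
    ultimately show "R \<in> (\<lambda>(P,Q). P @ Q) ` (pauli_labels m \<times> pauli_labels k)"
      by (metis (no_types, lifting) SigmaI case_prod_conv image_eqI)
  qed
  show "(\<lambda>(P,Q). P @ Q) ` (pauli_labels m \<times> pauli_labels k) \<subseteq> pauli_labels (m + k)"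
    by (auto simp: pauli_labels_def)
qed

lemma sum_labels_add: "(\<Sum>R\<in>pauli_labels (m + k). g R) = (\<Sum>P\<in>pauli_labels m. \<Sum>Q\<in>pauli_labels k. g (P @ Q))"
proof -
  have "inj_on (\<lambda>(P,Q). P @ Q) (pauli_labels m \<times> pauli_labels k)"
    by (auto simp: inj_on_def pauli_labels_def)
  then have "(\<Sum>R\<in>pauli_labels (m + k). g R) = (\<Sum>x\<in>pauli_labels m \<times> pauli_labels k. g ((\<lambda>(P,Q). P @ Q) x))"
    unfolding labels_add using sum.reindex[of "\<lambda>(P,Q). P @ Q" _ g] by (simp add: o_def)
  also have "\<dots> = (\<Sum>P\<in>pauli_labels m. \<Sum>Q\<in>pauli_labels k. g (P @ Q))"
    by (simp add: sum.cartesian_product split_def)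
  finally show ?thesis .
qed

lemma tc_kron:
  assumes P: "P \<in> pauli_labels m" and Q: "Q \<in> pauli_labels k"
    and A: "A \<in> carrier_mat (2^m) (2^m)" and B: "B \<in> carrier_mat (2^k) (2^k)"
  shows "tc (kron A B) (P @ Q) = tc A P * tc B Q"
proof -
  have cP: "pauli_string P \<in> carrier_mat (2^m) (2^m)" using ps_carrier[of P] P by (simp add: labels_len)
  have cQ: "pauli_string Q \<in> carrier_mat (2^k) (2^k)" using ps_carrier[of Q] Q by (simp add: labels_len)
  show ?thesis
    unfolding ps_append kron_mult[OF cP cQ A B]
    by (rule mtrace_kron[OF mult_carrier_mat[OF cP A] mult_carrier_mat[OF cQ B]])
qed

lemma M2t_kron:
  assumes dA: "density_matrix m A" and dB: "density_matrix k B"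
  shows "M2t (m + k) (kron A B) = M2t m A + M2t k B"
proof -
  define a where "a P = Re (tc A P)" for P
  define b where "b Q = Re (tc B Q)" for Q
  have AC: "A \<in> carrier_mat (2^m) (2^m)" and BC: "B \<in> carrier_mat (2^k) (2^k)"
    using dA dB by (auto simp: density_matrix_def)
  have re: "Re (tc (kron A B) (P @ Q)) = a P * b Q" if "P \<in> pauli_labels m" "Q \<in> pauli_labels k" for P Q
    using tc_kron[OF that AC BC] tc_real[OF dA that(1)] tc_real[OF dB that(2)] by (simp add: a_def b_def)
  have sums: "(\<Sum>R\<in>pauli_labels (m + k). Re (tc (kron A B) R) ^ e) =
      (\<Sum>P\<in>pauli_labels m. a P ^ e) * (\<Sum>Q\<in>pauli_labels k. b Q ^ e)" for e
    unfolding sum_labels_add sum_product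
    by (intro sum.cong refl) (simp add: re power_mult_distrib)
  define A4 where "A4 = (\<Sum>P\<in>pauli_labels m. a P ^ 4)"
  define A2 where "A2 = (\<Sum>P\<in>pauli_labels m. a P ^ 2)"
  define B4 where "B4 = (\<Sum>Q\<in>pauli_labels k. b Q ^ 4)"
  define B2 where "B2 = (\<Sum>Q\<in>pauli_labels k. b Q ^ 2)"
  have pos: "A4 \<ge> 1" "A2 \<ge> 1" "B4 \<ge> 1" "B2 \<ge> 1"
    using sums_pos[OF dA] sums_pos[OF dB] by (auto simp: A4_def A2_def B4_def B2_def a_def b_def)
  have "M2t (m + k) (kron A B) = - log 2 ((A4 * B4) / (A2 * B2))"
    unfolding M2t_def sums A4_def A2_def B4_def B2_def ..
  also have "(A4 * B4) / (A2 * B2) = (A4 / A2) * (B4 / B2)" by simp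
  also have "log 2 ((A4 / A2) * (B4 / B2)) = log 2 (A4 / A2) + log 2 (B4 / B2)"
    by (subst log_mult) (use pos in auto)
  finally show ?thesis by (simp add: M2t_def A4_def A2_def B4_def B2_def a_def b_def)
qed

lemma dagger_carrier: "C \<in> carrier_mat d d \<Longrightarrow> dagger C \<in> carrier_mat d d"
  by (auto simp: dagger_def)

lemma dagger_entry: "C \<in> carrier_mat d d \<Longrightarrow> i < d \<Longrightarrow> j < d \<Longrightarrow> dagger C $$ (i,j) = cnj (C $$ (j,i))"
  by (auto simp: dagger_def)

lemma mtrace_smult: "A \<in> carrier_mat d d \<Longrightarrow> mtrace (c \<cdot>\<^sub>m A) = c * mtrace A"
  by (auto simp: mtrace_def sum_distrib_left intro!: sum.cong)

lemma mtrace_comm: "A \<in> carrier_mat r m \<Longrightarrow> B \<in> carrier_mat m r \<Longrightarrow> mtrace (A * B) = mtrace (B * A)"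
  by (simp add: mtrace_mult mult.commute sum.swap[of _ "{..<r}"])

lemma conj_herm:
  assumes C: "C \<in> carrier_mat d d" and A: "A \<in> carrier_mat d d"
    and h: "\<And>i j. i < d \<Longrightarrow> j < d \<Longrightarrow> cnj (A $$ (i,j)) = A $$ (j,i)"
    and i: "i < d" and j: "j < d"
  shows "cnj ((C * A * dagger C) $$ (i,j)) = (C * A * dagger C) $$ (j,i)"
proof -
  have CA: "C * A \<in> carrier_mat d d" using C A by simp
  have D: "dagger C \<in> carrier_mat d d" using C by (rule dagger_carrier)
  have e: "(C * A * dagger C) $$ (i,j) = (\<Sum>k<d. \<Sum>l<d. C $$ (i,l) * A $$ (l,k) * cnj (C $$ (j,k)))"
    if "i < d" "j < d" for i j
    using that by (simp add: mult_entry[OF CA D] mult_entry[OF C A] dagger_entry[OF C] sum_distrib_right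
      del: index_mult_mat(1))
  have "cnj ((C * A * dagger C) $$ (i,j)) = (\<Sum>k<d. \<Sum>l<d. C $$ (j,k) * A $$ (k,l) * cnj (C $$ (i,l)))"
    unfolding e[OF i j] cnj_sum by (intro sum.cong refl) (auto simp: h mult_ac)
  also have "\<dots> = (\<Sum>l<d. \<Sum>k<d. C $$ (j,k) * A $$ (k,l) * cnj (C $$ (i,l)))"
    by (rule sum.swap)
  also have "\<dots> = (C * A * dagger C) $$ (j,i)"
    unfolding e[OF j i] ..
  finally show ?thesis .
qed

lemma unitary_cancel:
  assumes U: "unitary d C" and X: "X \<in> carrier_mat d d"
  shows "dagger C * (C * X * dagger C) * C = X"
proof -
  have C: "C \<in> carrier_mat d d" and u1: "dagger C * C = 1\<^sub>m d" using U by (auto simp: unitary_def)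
  have D: "dagger C \<in> carrier_mat d d" using C by (rule dagger_carrier)
  have "dagger C * (C * X * dagger C) * C = (dagger C * C) * X * (dagger C * C)"
    using C D X by (simp add: assoc_mult_mat[of _ d d _ d _ d])
  also have "\<dots> = X" using u1 X by simp
  finally show ?thesis .
qed

lemma trace_conj:
  assumes U: "unitary d C" and X: "X \<in> carrier_mat d d" and A: "A \<in> carrier_mat d d"
  shows "mtrace ((C * X * dagger C) * (C * A * dagger C)) = mtrace (X * A)"
proof -
  have C: "C \<in> carrier_mat d d" and u1: "dagger C * C = 1\<^sub>m d" using U by (auto simp: unitary_def)
  have D: "dagger C \<in> carrier_mat d d" using C by (rule dagger_carrier)
  have "(C * X * dagger C) * (C * A * dagger C) = C * (X * (dagger C * C) * A * dagger C)"
    using C D X A by (simp add: assoc_mult_mat[of _ d d _ d _ d])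
  also have "\<dots> = C * (X * A * dagger C)" using u1 X A by simp
  finally have "mtrace ((C * X * dagger C) * (C * A * dagger C)) = mtrace ((X * A * dagger C) * C)"
    using mtrace_comm[OF C, of "X * A * dagger C"] X A D by simp
  also have "(X * A * dagger C) * C = X * A * (dagger C * C)" using X A D C by (simp add: assoc_mult_mat[of _ d d _ d _ d])
  also have "\<dots> = X * A" using u1 X A by simp
  finally show ?thesis .
qed

lemma mtrace_smult2: "Y \<in> carrier_mat d d \<Longrightarrow> mtrace ((a \<cdot>\<^sub>m Y) * (b \<cdot>\<^sub>m Y)) = a * b * mtrace (Y * Y)"
proof -
  assume Y: "Y \<in> carrier_mat d d"
  have "mtrace ((a \<cdot>\<^sub>m Y) * (b \<cdot>\<^sub>m Y)) = (\<Sum>i<d. \<Sum>k<d. (a \<cdot>\<^sub>m Y) $$ (i,k) * (b \<cdot>\<^sub>m Y) $$ (k,i))"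
    by (rule mtrace_mult) (use Y in auto)
  also have "\<dots> = (\<Sum>i<d. \<Sum>k<d. a * b * (Y $$ (i,k) * Y $$ (k,i)))"
    using Y by (intro sum.cong refl) auto
  also have "\<dots> = a * b * mtrace (Y * Y)"
    by (simp add: mtrace_mult[OF Y Y] sum_distrib_left)
  finally show ?thesis .
qed

lemma M2t_clifford:
  assumes dm: "density_matrix n \<rho>" and cl: "clifford n C"
  shows "M2t n (C * \<rho> * dagger C) = M2t n \<rho>"
proof -
  define d :: nat where "d = 2^n"
  define L where "L = pauli_labels n"
  define \<rho>' where "\<rho>' = C * \<rho> * dagger C"
  have U: "unitary d C" using cl by (simp add: clifford_def d_def)
  have CC: "C \<in> carrier_mat d d" using U by (simp add: unitary_def)
  have DC: "dagger C \<in> carrier_mat d d" using CC by (rule dagger_carrier)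
  have \<rho>C: "\<rho> \<in> carrier_mat d d" using dm by (simp add: density_matrix_def d_def)
  have \<rho>'C: "\<rho>' \<in> carrier_mat d d" using CC DC \<rho>C by (simp add: \<rho>'_def)
  have psC: "pauli_string P \<in> carrier_mat d d" if "P \<in> L" for P
    using ps_carrier[of P] that by (simp add: L_def d_def labels_len)
  have "\<forall>P\<in>L. \<exists>Q. Q \<in> L \<and> (\<exists>c. c \<in> {1, -1, \<i>, - \<i>} \<and> C * pauli_string P * dagger C = c \<cdot>\<^sub>m pauli_string Q)"
    using cl unfolding clifford_def L_def by blast
  then obtain f where f: "\<forall>P\<in>L. f P \<in> L \<and> (\<exists>c. c \<in> {1, -1, \<i>, - \<i>} \<and> C * pauli_string P * dagger C = c \<cdot>\<^sub>m pauli_string (f P))"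
    by (metis (no_types, lifting))
  then have "\<forall>P\<in>L. \<exists>c. c \<in> {1, -1, \<i>, - \<i>} \<and> C * pauli_string P * dagger C = c \<cdot>\<^sub>m pauli_string (f P)" by blast
  then obtain cf where cf: "\<forall>P\<in>L. cf P \<in> {1, -1, \<i>, - \<i>} \<and> C * pauli_string P * dagger C = cf P \<cdot>\<^sub>m pauli_string (f P)"
    by metis
  have fL: "f P \<in> L" if "P \<in> L" for P using f that by blast
  have cfm: "cmod (cf P) = 1" and cf0: "cf P \<noteq> 0" if "P \<in> L" for P using cf that by auto
  have cfe: "C * pauli_string P * dagger C = cf P \<cdot>\<^sub>m pauli_string (f P)" if "P \<in> L" for P using cf that by blast
  have rel: "cf P * tc \<rho>' (f P) = tc \<rho> P" if P: "P \<in> L" for P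
  proof -
    have "cf P * tc \<rho>' (f P) = mtrace ((cf P \<cdot>\<^sub>m pauli_string (f P)) * \<rho>')"
      using psC[OF fL[OF P]] \<rho>'C by (simp add: mult_smult_assoc_mat[of _ d d _ d] mtrace_smult[of _ d])
    also have "\<dots> = mtrace ((C * pauli_string P * dagger C) * (C * \<rho> * dagger C))"
      unfolding cfe[OF P] \<rho>'_def ..
    also have "\<dots> = tc \<rho> P" by (rule trace_conj[OF U psC[OF P] \<rho>C])
    finally show ?thesis .
  qed
  have herm\<rho>: "cnj (\<rho> $$ (i,j)) = \<rho> $$ (j,i)" if "i < d" "j < d" for i j
    using dm_herm[OF dm] that by (simp add: d_def)
  have real': "Im (tc \<rho>' Q) = 0" if "Q \<in> L" for Q
    using trace_real[OF psC[OF that] \<rho>'C] ps_herm[of _ Q] conj_herm[OF CC \<rho>C herm\<rho>] that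
    by (simp add: \<rho>'_def d_def L_def labels_len)
  have real: "Im (tc \<rho> P) = 0" if "P \<in> L" for P using tc_real[OF dm] that by (simp add: L_def)
  have sq: "Re (tc \<rho>' (f P)) ^ 2 = Re (tc \<rho> P) ^ 2" if P: "P \<in> L" for P
  proof -
    have "cmod (tc \<rho> P) = cmod (tc \<rho>' (f P))"
      using rel[OF P] cfm[OF P] by (metis norm_mult mult_1)
    then have "cmod (tc \<rho> P) ^ 2 = cmod (tc \<rho>' (f P)) ^ 2" by simp
    then show ?thesis using real[OF P] real'[OF fL[OF P]] by (simp add: cmod_power2)
  qed
  have inj: "inj_on f L"
  proof (rule inj_onI)
    fix P P' assume P: "P \<in> L" and P': "P' \<in> L" and eq: "f P = f P'"
    define Y where "Y = dagger C * pauli_string (f P) * C"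
    have YC: "Y \<in> carrier_mat d d" using DC CC psC[OF fL[OF P]] by (simp add: Y_def)
    have rec: "pauli_string R = cf R \<cdot>\<^sub>m Y" if R: "R \<in> L" "f R = f P" for R
    proof -
      have "pauli_string R = dagger C * (C * pauli_string R * dagger C) * C"
        by (rule unitary_cancel[OF U psC[OF R(1)], symmetric])
      also have "\<dots> = dagger C * (cf R \<cdot>\<^sub>m pauli_string (f P)) * C" using cfe[OF R(1)] R(2) by simp
      also have "\<dots> = cf R \<cdot>\<^sub>m Y"
        using DC CC psC[OF fL[OF P]]
        by (simp add: Y_def mult_smult_distrib[of _ d d _ d] mult_smult_assoc_mat[of _ d d _ d])
      finally show ?thesis .
    qed
    have "mtrace (pauli_string P * pauli_string P) = cf P * cf P * mtrace (Y * Y)"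
      unfolding rec[OF P refl] by (rule mtrace_smult2[OF YC])
    moreover have "mtrace (pauli_string P * pauli_string P) = 2^n"
      using ps_orth P by (simp add: L_def)
    ultimately have "mtrace (Y * Y) \<noteq> 0" by auto
    moreover have "mtrace (pauli_string P * pauli_string P') = cf P * cf P' * mtrace (Y * Y)"
      unfolding rec[OF P refl] rec[OF P' eq[symmetric]] by (rule mtrace_smult2[OF YC])
    ultimately have "mtrace (pauli_string P * pauli_string P') \<noteq> 0" using cf0[OF P] cf0[OF P'] by simp
    then show "P = P'" using ps_orth[of P n P'] P P' by (auto simp: L_def split: if_splits)
  qed
  have img: "f ` L = L" by (rule endo_inj_surj) (use fL inj in \<open>auto simp: L_def\<close>)
  have reidx: "(\<Sum>Q\<in>L. h Q) = (\<Sum>P\<in>L. h (f P))" for h :: "nat list \<Rightarrow> real"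
    using sum.reindex[OF inj, of h] img by simp
  have s2: "(\<Sum>Q\<in>L. Re (tc \<rho>' Q) ^ 2) = (\<Sum>P\<in>L. Re (tc \<rho> P) ^ 2)"
    unfolding reidx[of "\<lambda>Q. Re (tc \<rho>' Q) ^ 2"] by (intro sum.cong refl) (simp add: sq)
  have s4: "(\<Sum>Q\<in>L. Re (tc \<rho>' Q) ^ 4) = (\<Sum>P\<in>L. Re (tc \<rho> P) ^ 4)"
  proof -
    have "(\<Sum>Q\<in>L. Re (tc \<rho>' Q) ^ 4) = (\<Sum>P\<in>L. (Re (tc \<rho>' (f P)) ^ 2) ^ 2)"
      unfolding reidx[of "\<lambda>Q. Re (tc \<rho>' Q) ^ 4"] by (simp add: power_mult[symmetric])
    also have "\<dots> = (\<Sum>P\<in>L. (Re (tc \<rho> P) ^ 2) ^ 2)" by (intro sum.cong refl) (simp add: sq)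
    finally show ?thesis by (simp add: power_mult[symmetric])
  qed
  show ?thesis unfolding M2t_def using s2 s4 by (simp add: \<rho>'_def L_def)
qed

theorem mainTheorem4:
  fixes n :: nat
  assumes "n \<ge> 1"
  shows "(\<forall>\<rho>. density_matrix n \<rho> \<longrightarrow> (M2t n \<rho> = 0 \<longleftrightarrow> stabilizer_state n \<rho>))
       \<and> (\<forall>\<rho> C. density_matrix n \<rho> \<longrightarrow> clifford n C \<longrightarrow>
              M2t n (C * \<rho> * dagger C) = M2t n \<rho>)
       \<and> (\<forall>m k \<rho> \<sigma>. m \<ge> 1 \<longrightarrow> k \<ge> 1 \<longrightarrow> density_matrix m \<rho> \<longrightarrow> density_matrix k \<sigma> \<longrightarrow>
              M2t (m + k) (kron \<rho> \<sigma>) = M2t m \<rho> + M2t k \<sigma>)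
       \<and> (\<forall>m k \<rho> S. m \<ge> 1 \<longrightarrow> k \<ge> 1 \<longrightarrow> density_matrix m \<rho> \<longrightarrow> stabilizer_state k S \<longrightarrow>
              M2t (m + k) (kron \<rho> S) = M2t m \<rho>)"
proof (intro conjI allI impI)
  fix \<rho> assume "density_matrix n \<rho>"
  then show "M2t n \<rho> = 0 \<longleftrightarrow> stabilizer_state n \<rho>"
    using M2t_zero_stab stab_M2t by blast
next
  fix \<rho> C assume "density_matrix n \<rho>" "clifford n C"
  then show "M2t n (C * \<rho> * dagger C) = M2t n \<rho>" by (rule M2t_clifford)
next
  fix m k :: nat and \<rho> \<sigma> assume "density_matrix m \<rho>" "density_matrix k \<sigma>"
  then show "M2t (m + k) (kron \<rho> \<sigma>) = M2t m \<rho> + M2t k \<sigma>" by (rule M2t_kron)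
next
  fix m k :: nat and \<rho> S assume "density_matrix m \<rho>" "stabilizer_state k S"
  then show "M2t (m + k) (kron \<rho> S) = M2t m \<rho>"
    using M2t_kron[of m \<rho> k S] stab_M2t[of k S] by simp
qed

end
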